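(* If $\sum_{i=1}^M b_i<1$, then for every $\epsilon>0$, $$\bar\Delta_{\mathrm{opt}}(\epsilon)\ge\bar\Delta_{\mathrm{opt},2}(\epsilon)\ge\sum_{l=1}^M\frac{w_l}{b_l}\exp\!\Big(-\frac{\sum_{i=1}^M b_i}{1-\sum_{i=1}^M b_i}\,\epsilon\Big)+\sum_{l=1}^M w_l.$$
   Context: Fix an integer $M\ge1$, weights $w_1,\dots,w_M>0$, constants $b_1,\dots,b_M>0$, and $\epsilon>0$. For $\mathbf r\in(0,\infty)^M$ write $S(\mathbf r)=\sum_{i=1}^M r_i$ and define $$\bar\Delta(\mathbf r)=\sum_{l=1}^M \frac{w_l e^{-r_l\epsilon}}{r_l}\, e^{\epsilon S(\mathbf r)}\big(1+S(\mathbf r)\big)+\sum_{l=1}^M w_l,\qquad \sigma_l(\mathbf r)=\frac{(1-e^{-r_l\epsilon})S(\mathbf r)+r_le^{-r_l\epsilon}}{S(\mathbf r)+1}.$$ Problem 1: minimize $\bar\Delta(\mathbf r)$ over $\mathbf r\in(0,\infty)^M$ subject to $\sigma_l(\mathbf r)\le b_l$ for all $l$; its optimal (infimum) value is $\bar\Delta_{\mathrm{opt}}(\epsilon)$. Problem 2: minimize $\bar\Delta(\mathbf r)$ over $\mathbf r\in(0,\infty)^M$ subject to $r_l\le b_l\big(S(\mathbf r)+1\big)$ for all $l$; its optimal (infimum) value is $\bar\Delta_{\mathrm{opt},2}(\epsilon)$. *)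

theory Defs
  imports "HOL-Analysis.Analysis"
begin

text \<open>Vectors r in (0,inf)^M are represented as functions nat => real, indexed by {1..M}.\<close>

definition Ssum :: "nat \<Rightarrow> (nat \<Rightarrow> real) \<Rightarrow> real" where
  "Ssum M r = (\<Sum>i=1..M. r i)"

definition Delta_bar :: "nat \<Rightarrow> (nat \<Rightarrow> real) \<Rightarrow> real \<Rightarrow> (nat \<Rightarrow> real) \<Rightarrow> real" where
  "Delta_bar M w \<epsilon> r =
     (\<Sum>l=1..M. w l * exp (- r l * \<epsilon>) / r l * exp (\<epsilon> * Ssum M r) * (1 + Ssum M r))
     + (\<Sum>l=1..M. w l)"

definition sigma :: "nat \<Rightarrow> real \<Rightarrow> (nat \<Rightarrow> real) \<Rightarrow> nat \<Rightarrow> real" where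
  "sigma M \<epsilon> r l =
     ((1 - exp (- r l * \<epsilon>)) * Ssum M r + r l * exp (- r l * \<epsilon>)) / (Ssum M r + 1)"

definition feasible1 :: "nat \<Rightarrow> (nat \<Rightarrow> real) \<Rightarrow> real \<Rightarrow> (nat \<Rightarrow> real) set" where
  "feasible1 M b \<epsilon> = {r. (\<forall>i\<in>{1..M}. 0 < r i) \<and> (\<forall>l\<in>{1..M}. sigma M \<epsilon> r l \<le> b l)}"

definition feasible2 :: "nat \<Rightarrow> (nat \<Rightarrow> real) \<Rightarrow> (nat \<Rightarrow> real) set" where
  "feasible2 M b = {r. (\<forall>i\<in>{1..M}. 0 < r i) \<and> (\<forall>l\<in>{1..M}. r l \<le> b l * (Ssum M r + 1))}"

definition Delta_opt :: "nat \<Rightarrow> (nat \<Rightarrow> real) \<Rightarrow> (nat \<Rightarrow> real) \<Rightarrow> real \<Rightarrow> real" where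
  "Delta_opt M w b \<epsilon> = (INF r\<in>feasible1 M b \<epsilon>. Delta_bar M w \<epsilon> r)"

definition Delta_opt2 :: "nat \<Rightarrow> (nat \<Rightarrow> real) \<Rightarrow> (nat \<Rightarrow> real) \<Rightarrow> real \<Rightarrow> real" where
  "Delta_opt2 M w b \<epsilon> = (INF r\<in>feasible2 M b. Delta_bar M w \<epsilon> r)"

end

theory Submission
  imports Defs
begin

lemma S_ge: assumes "\<forall>i\<in>{1..M}. 0 < r i" "l \<in> {1..M}" shows "r l \<le> Ssum M r"
proof -
  have "\<forall>i\<in>{1..M}. 0 \<le> r i" using assms by (auto intro: less_imp_le)
  thus ?thesis unfolding Ssum_def using assms(2) by (intro member_le_sum) auto
qed

lemma f1_sub_f2: assumes "\<epsilon> > 0" shows "feasible1 M b \<epsilon> \<subseteq> feasible2 M b"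
proof
  fix r assume "r \<in> feasible1 M b \<epsilon>"
  hence pos: "\<forall>i\<in>{1..M}. 0 < r i" and sg: "\<forall>l\<in>{1..M}. sigma M \<epsilon> r l \<le> b l"
    unfolding feasible1_def by auto
  have "r l \<le> b l * (Ssum M r + 1)" if l: "l \<in> {1..M}" for l
  proof -
    have Sr: "r l \<le> Ssum M r" using S_ge[OF pos l] .
    have S0: "0 < Ssum M r + 1" using Sr pos l by force
    have "0 \<le> r l * \<epsilon>" using pos l assms by (simp add: less_imp_le)
    hence e1: "exp (- r l * \<epsilon>) \<le> 1" by simp
    have "(1 - exp (- r l * \<epsilon>)) * (Ssum M r - r l) \<ge> 0" using e1 Sr by auto
    hence "r l \<le> (1 - exp (- r l * \<epsilon>)) * Ssum M r + r l * exp (- r l * \<epsilon>)"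
      by (simp add: algebra_simps)
    also have "\<dots> \<le> b l * (Ssum M r + 1)"
      using sg l S0 unfolding sigma_def by (simp add: divide_le_eq)
    finally show ?thesis .
  qed
  thus "r \<in> feasible2 M b" using pos unfolding feasible2_def by auto
qed

lemma term_ge:
  fixes w r b S e :: real
  assumes "0 < r" "0 < b" "0 < w" "r \<le> b * (S + 1)" "r \<le> S" "0 < e"
  shows "w / b \<le> w * exp (- r * e) / r * exp (e * S) * (1 + S)"
proof -
  have ex: "exp (- r * e) * exp (e * S) = exp (e * (S - r))" by (simp add: exp_add[symmetric] algebra_simps)
  have ex1: "1 \<le> exp (e * (S - r))" using assms by auto
  have "r * w \<le> b * (S + 1) * w" using assms by (intro mult_right_mono) auto
  hence "w / b \<le> w * (1 + S) / r" using assms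
    by (simp add: divide_le_eq le_divide_eq algebra_simps)
  also have "\<dots> \<le> w * (1 + S) / r * exp (e * (S - r))"
  proof -
    have "0 \<le> w * (1 + S) / r" using assms by auto
    from mult_left_mono[OF ex1 this] show ?thesis by simp
  qed
  also have "\<dots> = w * exp (- r * e) / r * exp (e * S) * (1 + S)"
    using ex by (simp add: field_simps)
  finally show ?thesis .
qed

lemma lower2:
  assumes "\<forall>i\<in>{1..M}. w i > 0" "\<forall>i\<in>{1..M}. b i > 0" "\<epsilon> > 0" "r \<in> feasible2 M b"
  shows "(\<Sum>l=1..M. w l / b l) + (\<Sum>l=1..M. w l) \<le> Delta_bar M w \<epsilon> r"
proof -
  have pos: "\<forall>i\<in>{1..M}. 0 < r i" and c: "\<forall>l\<in>{1..M}. r l \<le> b l * (Ssum M r + 1)"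
    using assms(4) unfolding feasible2_def by auto
  have "(\<Sum>l=1..M. w l / b l) \<le> (\<Sum>l=1..M. w l * exp (- r l * \<epsilon>) / r l * exp (\<epsilon> * Ssum M r) * (1 + Ssum M r))"
    apply (rule sum_mono)
    apply (rule term_ge)
    using pos c assms S_ge[OF pos] by auto
  thus ?thesis unfolding Delta_bar_def by simp
qed

lemma div_le_aux: fixes x d :: real assumes "0 \<le> x" "0 \<le> d" shows "x / (d + 1) \<le> x"
proof -
  have "x * 1 \<le> x * (d + 1)" using assms by (intro mult_left_mono) auto
  thus ?thesis using assms by (simp add: divide_le_eq)
qed

lemma f1_ne:
  assumes "M \<ge> 1" "\<forall>i\<in>{1..M}. b i > 0" "\<epsilon> > 0"
  shows "feasible1 M b \<epsilon> \<noteq> {}"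
proof -
  define \<beta> where "\<beta> = Min (b ` {1..M})"
  have \<beta>0: "\<beta> > 0" unfolding \<beta>_def using assms by (subst Min_gr_iff) auto
  have \<beta>le: "\<beta> \<le> b l" if "l \<in> {1..M}" for l unfolding \<beta>_def using that by auto
  define K where "K = \<epsilon> * real M + 1"
  have K1: "K \<ge> 1" unfolding K_def using assms by auto
  define t where "t = min 1 (\<beta> / K)"
  have t0: "t > 0" unfolding t_def using \<beta>0 K1 by auto
  have t1: "t \<le> 1" unfolding t_def by auto
  have "t \<le> \<beta> / K" unfolding t_def by simp
  hence "t * K \<le> \<beta> / K * K" using K1 by (intro mult_right_mono) auto
  hence tK: "t * K \<le> \<beta>" using K1 by simp
  define r where "r = (\<lambda>_::nat. t)"
  have S: "Ssum M r = real M * t" unfolding Ssum_def r_def by simp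
  have "sigma M \<epsilon> r l \<le> b l" if l: "l \<in> {1..M}" for l
  proof -
    have e1: "exp (- t * \<epsilon>) \<le> 1" using t0 assms by auto
    have e2: "1 - exp (- t * \<epsilon>) \<le> t * \<epsilon>" using exp_ge_add_one_self[of "- t * \<epsilon>"] by auto
    have Mt: "0 \<le> real M * t" using t0 by auto
    have "(1 - exp (- t * \<epsilon>)) * (real M * t) \<le> t * \<epsilon> * (real M * t)"
      using e2 Mt by (rule mult_right_mono)
    also have "\<dots> \<le> t * \<epsilon> * real M"
      using t0 t1 assms by (simp add: mult_left_le)
    finally have a: "(1 - exp (- t * \<epsilon>)) * (real M * t) \<le> t * \<epsilon> * real M" .
    have b: "t * exp (- t * \<epsilon>) \<le> t" using e1 t0 by (simp add: mult_left_le)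
    have num: "(1 - exp (- t * \<epsilon>)) * (real M * t) + t * exp (- t * \<epsilon>) \<le> t * K"
      using a b unfolding K_def by (simp add: algebra_simps)
    have nn: "0 \<le> (1 - exp (- t * \<epsilon>)) * (real M * t) + t * exp (- t * \<epsilon>)"
      using e1 Mt t0 by (intro add_nonneg_nonneg mult_nonneg_nonneg) auto
    have "sigma M \<epsilon> r l \<le> (1 - exp (- t * \<epsilon>)) * (real M * t) + t * exp (- t * \<epsilon>)"
      unfolding sigma_def S using Mt nn by (simp add: r_def div_le_aux)
    also have "\<dots> \<le> b l" using num tK \<beta>le[OF l] by linarith
    finally show ?thesis .
  qed
  moreover have "\<forall>i\<in>{1..M}. 0 < r i" using t0 r_def by auto
  ultimately have "r \<in> feasible1 M b \<epsilon>" unfolding feasible1_def by auto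
  thus ?thesis by auto
qed

theorem lemma6:
  fixes M :: nat and w b :: "nat \<Rightarrow> real" and \<epsilon> :: real
  assumes "M \<ge> 1"
    and "\<forall>i\<in>{1..M}. w i > 0"
    and "\<forall>i\<in>{1..M}. b i > 0"
    and "(\<Sum>i=1..M. b i) < 1"
    and "\<epsilon> > 0"
  shows "Delta_opt M w b \<epsilon> \<ge> Delta_opt2 M w b \<epsilon>
    \<and> Delta_opt2 M w b \<epsilon> \<ge>
        (\<Sum>l=1..M. w l / b l * exp (- ((\<Sum>i=1..M. b i) / (1 - (\<Sum>i=1..M. b i))) * \<epsilon>))
        + (\<Sum>l=1..M. w l)"
proof -
  let ?L = "(\<Sum>l=1..M. w l / b l) + (\<Sum>l=1..M. w l)"
  have ne1: "feasible1 M b \<epsilon> \<noteq> {}" using f1_ne assms by auto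
  have sub: "feasible1 M b \<epsilon> \<subseteq> feasible2 M b" using f1_sub_f2 assms by auto
  have ne2: "feasible2 M b \<noteq> {}" using ne1 sub by auto
  have lb: "\<And>r. r \<in> feasible2 M b \<Longrightarrow> ?L \<le> Delta_bar M w \<epsilon> r"
    using lower2 assms by auto
  have bdd: "bdd_below (Delta_bar M w \<epsilon> ` feasible2 M b)"
    by (rule bdd_belowI2[where m="?L"]) (rule lb)
  have p1: "Delta_opt2 M w b \<epsilon> \<le> Delta_opt M w b \<epsilon>"
    unfolding Delta_opt_def Delta_opt2_def
    by (rule cINF_superset_mono[OF ne1 bdd sub]) simp
  have p2: "?L \<le> Delta_opt2 M w b \<epsilon>"
    unfolding Delta_opt2_def by (rule cINF_greatest[OF ne2 lb])
  have p3: "(\<Sum>l=1..M. w l / b l * exp (- ((\<Sum>i=1..M. b i) / (1 - (\<Sum>i=1..M. b i))) * \<epsilon>))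
       \<le> (\<Sum>l=1..M. w l / b l)"
  proof (rule sum_mono)
    fix l assume l: "l \<in> {1..M}"
    have B0: "0 \<le> (\<Sum>i=1..M. b i)" using assms(3) by (intro sum_nonneg) (auto intro: less_imp_le)
    have "exp (- ((\<Sum>i=1..M. b i) / (1 - (\<Sum>i=1..M. b i))) * \<epsilon>) \<le> 1"
      using B0 assms(4,5) by auto
    moreover have "0 \<le> w l / b l" using assms(2,3) l by (simp add: less_imp_le)
    ultimately show "w l / b l * exp (- ((\<Sum>i=1..M. b i) / (1 - (\<Sum>i=1..M. b i))) * \<epsilon>) \<le> w l / b l"
      using mult_left_mono[of _ 1 "w l / b l"] by (metis mult.right_neutral)
  qed
  show ?thesis using p1 p2 p3 by linarith
qed

end
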